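(* Let $f_{r,k}(x)=x^2\exp(r-x)+k$ and $c=2$. For any $0\leq k<2$ there exists $r^*=r^*(k)$ such that for all $r\geq r^*(k)$, \[ f_{r,k}^2(c)<c<f_{r,k}(c). \] Moreover, for $0<k<2$ the value $r^*(k)$ can be chosen such that, in addition, for all $r\geq r^*(k)$ the interval $[f_{r,k}^2(c),f_{r,k}(c)]$ contains exactly one fixed point of $f_{r,k}$.
   Context: $c=2$ is the unique critical point of $f_{r,k}$ on $(0,\infty)$ (the point of maximum of $f_{r,k}$ on $[0,\infty)$). *)

theory Defs
  imports Complex_Main
begin

definition f_rk :: "real \<Rightarrow> real \<Rightarrow> real \<Rightarrow> real" where
  "f_rk r k x = x\<^sup>2 * exp (r - x) + k"

end

theory Submission
  imports Defs "HOL-Real_Asymp.Real_Asymp"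
begin

lemma f2_eq: "(f_rk r k ^^ 2) x = f_rk r k (f_rk r k x)"
  by (simp add: numeral_2_eq_2)

lemma dec_aux:
  fixes x y r :: real
  assumes "2 \<le> x" "x \<le> y"
  shows "y^2 * exp (r - y) \<le> x^2 * exp (r - x)"
proof -
  have xp: "x > 0" using assms by simp
  have "ln (y / x) \<le> y / x - 1" using assms by (intro ln_le_minus_one) simp
  also have "y / x - 1 = (y - x) / x" using xp by (simp add: field_simps)
  also have "\<dots> \<le> (y - x) / 2" using assms by (intro divide_left_mono) auto
  finally have l: "2 * ln (y / x) \<le> y - x" by simp
  have "(y/x)^2 = exp (2 * ln (y/x))"
  proof -
    have yx: "y/x > 0" using assms xp by simp
    have "exp (2 * ln (y/x)) = exp (ln (y/x) + ln (y/x))" by (simp only: mult_2)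
    also have "\<dots> = exp (ln (y/x)) * exp (ln (y/x))" by (rule exp_add)
    also have "\<dots> = (y/x) * (y/x)" by (simp only: exp_ln[OF yx])
    also have "\<dots> = (y/x)^2" by (rule power2_eq_square[symmetric])
    finally show ?thesis by (rule sym)
  qed
  also have "\<dots> \<le> exp (y - x)" using l by simp
  finally have "y^2 / x^2 \<le> exp (y - x)" by (simp add: power_divide)
  hence "y^2 \<le> exp (y - x) * x^2" using xp by (subst (asm) pos_divide_le_eq) auto
  hence m: "y^2 * exp (r - y) \<le> (exp (y - x) * x^2) * exp (r - y)"
    by (intro mult_right_mono) simp_all
  have e1: "(exp (y - x) * x^2) * exp (r - y) = x^2 * (exp (y - x) * exp (r - y))" by (simp only: ac_simps)
  have e2: "exp (y - x) * exp (r - y) = exp (r - x)" by (simp only: exp_add[symmetric]) simp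
  show ?thesis using m unfolding e1 e2 .
qed

lemma fix_unique:
  fixes r k :: real
  assumes k: "0 < k" and a: "f_rk r k (f_rk r k 2) < 2" and M: "2 < f_rk r k 2"
    and big: "2 < k^2 * exp (r - 2)"
  shows "\<exists>!x. x \<in> {f_rk r k (f_rk r k 2) .. f_rk r k 2} \<and> f_rk r k x = x"
proof -
  define f where "f = f_rk r k"
  define M where "M = f 2"
  define a where "a = f M"
  have fx: "f x = x^2 * exp (r - x) + k" for x unfolding f_def f_rk_def by simp
  have ak: "a \<ge> k" unfolding a_def fx by simp
  have a2: "a < 2" "2 < M" using a M unfolding a_def M_def f_def by auto
  have low: "f x > x" if "a \<le> x" "x \<le> 2" for x
  proof -
    have "k^2 \<le> x^2" using that ak k by (intro power_mono) auto
    moreover have "exp (r - 2) \<le> exp (r - x)" using that by simp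
    ultimately have "k^2 * exp (r - 2) \<le> x^2 * exp (r - x)" by (intro mult_mono) auto
    thus ?thesis using big that fx[of x] k by linarith
  qed
  have hi: "f y - y < f x - x" if "2 \<le> x" "x < y" for x y
    using dec_aux[of x y r] that fx[of x] fx[of y] by simp
  have cont: "continuous_on {2..M} (\<lambda>x. f x - x)"
    unfolding fx by (intro continuous_intros)
  have "\<exists>x\<ge>2. x \<le> M \<and> f x - x = 0"
    using a2 low[of 2] by (intro IVT2'[OF _ _ _ cont]) (auto simp: a_def)
  then obtain x where x: "2 \<le> x" "x \<le> M" "f x = x" by auto
  show ?thesis unfolding f_def[symmetric] M_def[symmetric] a_def[symmetric]
  proof (rule ex1I[of _ x])
    show "x \<in> {a..M} \<and> f x = x" using x a2 by auto
  next
    fix y assume y: "y \<in> {a..M} \<and> f y = y"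
    have ya: "a \<le> y" "f y = y" using y by auto
    have y2: "y > 2"
    proof (rule ccontr)
      assume "\<not> y > 2"
      hence "f y > y" using low[of y] ya by simp
      thus False using ya by simp
    qed
    show "y = x"
    proof (rule ccontr)
      assume "y \<noteq> x"
      then consider "x < y" | "y < x" by linarith
      thus False
      proof cases
        case 1
        have "f y - y < f x - x" using hi[of x y] x(1) 1 by simp
        thus False using x(3) ya(2) by simp
      next
        case 2
        have "f x - x < f y - y" using hi[of y x] y2 2 by simp
        thus False using x(3) ya(2) by simp
      qed
    qed
  qed
qed

lemma ev1:
  fixes k :: real
  assumes that: "k < 2" "0 \<le> k"
  shows "eventually (\<lambda>r. f_rk r k (f_rk r k 2) < 2 \<and> 2 < f_rk r k 2) at_top"
proof -
  have "((\<lambda>r. (4*exp(r-2)+k)^2 * exp (r - (4*exp(r-2)+k)) + k) \<longlongrightarrow> k) at_top"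
    by real_asymp
  hence e1: "eventually (\<lambda>r. (4*exp(r-2)+k)^2 * exp (r - (4*exp(r-2)+k)) + k < 2) at_top"
    using that by (intro order_tendstoD) auto
  have "filterlim (\<lambda>r. 4*exp(r-2)+k) at_top at_top" by real_asymp
  hence e2: "eventually (\<lambda>r. 4*exp(r-2)+k > 2) at_top"
    by (simp add: filterlim_at_top_dense)
  have eq: "f_rk r k 2 = 4*exp(r-2)+k" for r unfolding f_rk_def by simp
  show ?thesis using eventually_conj[OF e1 e2] unfolding eq by (simp add: f_rk_def eq)
qed

lemma ev2:
  fixes k :: real
  assumes that: "0 < k"
  shows "eventually (\<lambda>r. 2 < k^2 * exp (r - 2)) at_top"
proof -
  have "filterlim (\<lambda>r. k^2 * exp(r-2)) at_top at_top" using that by real_asymp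
  thus ?thesis by (simp add: filterlim_at_top_dense)
qed

theorem lemma3p1:
  shows "(\<forall>k::real. 0 \<le> k \<and> k < 2 \<longrightarrow>
            (\<exists>rs::real. \<forall>r\<ge>rs. (f_rk r k ^^ 2) 2 < 2 \<and> 2 < f_rk r k 2))
       \<and> (\<forall>k::real. 0 < k \<and> k < 2 \<longrightarrow>
            (\<exists>rs::real. \<forall>r\<ge>rs. (f_rk r k ^^ 2) 2 < 2 \<and> 2 < f_rk r k 2 \<and>
               (\<exists>!x. x \<in> {(f_rk r k ^^ 2) 2 .. f_rk r k 2} \<and> f_rk r k x = x)))"
proof (intro conjI allI impI)
  fix k :: real assume k: "0 \<le> k \<and> k < 2"
  show "\<exists>rs::real. \<forall>r\<ge>rs. (f_rk r k ^^ 2) 2 < 2 \<and> 2 < f_rk r k 2"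
    using ev1[of k] k unfolding f2_eq eventually_at_top_linorder by auto
next
  fix k :: real assume k: "0 < k \<and> k < 2"
  have "eventually (\<lambda>r. (f_rk r k (f_rk r k 2) < 2 \<and> 2 < f_rk r k 2) \<and> 2 < k^2 * exp (r - 2)) at_top"
  proof -
    have e1: "eventually (\<lambda>r. f_rk r k (f_rk r k 2) < 2 \<and> 2 < f_rk r k 2) at_top"
      using ev1[of k] k by auto
    have e2: "eventually (\<lambda>r. 2 < k^2 * exp (r - 2)) at_top" using ev2[of k] k by auto
    show ?thesis using eventually_conj[OF e1 e2] by simp
  qed
  then obtain rs where rs: "\<And>r. r \<ge> rs \<Longrightarrow> (f_rk r k (f_rk r k 2) < 2 \<and> 2 < f_rk r k 2) \<and> 2 < k^2 * exp (r - 2)"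
    unfolding eventually_at_top_linorder by auto
  show "\<exists>rs::real. \<forall>r\<ge>rs. (f_rk r k ^^ 2) 2 < 2 \<and> 2 < f_rk r k 2 \<and>
               (\<exists>!x. x \<in> {(f_rk r k ^^ 2) 2 .. f_rk r k 2} \<and> f_rk r k x = x)"
    unfolding f2_eq
  proof (intro exI allI impI)
    fix r assume r: "r \<ge> rs"
    from rs[OF r] have h1: "f_rk r k (f_rk r k 2) < 2" and h2: "2 < f_rk r k 2"
      and h3: "2 < k^2 * exp (r - 2)" by auto
    have k0: "0 < k" using k by simp
    show "f_rk r k (f_rk r k 2) < 2 \<and> 2 < f_rk r k 2 \<and>
               (\<exists>!x. x \<in> {f_rk r k (f_rk r k 2) .. f_rk r k 2} \<and> f_rk r k x = x)"
      by (intro conjI h1 h2 fix_unique[OF k0 h1 h2 h3])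
  qed
qed

end
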